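(* Let $T$ be a p-string of length $n$, let $v$ be a node of $\mathrm{PPH}(T)$, and let $a\in\Sigma\cup\{0,\ldots,n-1\}$. Suppose $\mathrm{rslink}(a,v)=u$, where $u$ is a node of $\mathrm{PPH}(T)$. Then for every p-string $X$ with $\mathrm{prev}(X)=u$, we have $\mathrm{prev}(X[2..|X|])=v$.
   Context: Let $\Sigma$ and $\Pi$ be disjoint alphabets. A p-string is a finite string over $\Sigma\cup\Pi$. For a string $S$, $S[i]$ is its $i$-th character, $S[i..j]$ is the substring from position $i$ to $j$ (empty if $j<i$), and $S[i..]=S[i..|S|]$. The previous encoding $\mathrm{prev}(S)$ of a p-string $S$ of length $n$ is the sequence of length $n$ defined by: - $\mathrm{prev}(S)[i]=S[i]$ if $S[i]\in\Sigma$; - $\mathrm{prev}(S)[i]=0$ if $S[i]\in\Pi$ does not occur in $S[1..i-1]$; - $\mathrm{prev}(S)[i]=i-j$ otherwise, where $j<i$ is the largest position with $S[j]=S[i]$. Sequence hash tree. Let $\langle S_1,\ldots,S_k\rangle$ be a sequence of strings with $S_1=\varepsilon$ and with $S_i$ not a prefix of $S_j$ for any $j<i$. Its sequence hash tree is built as follows. Start from a root representing $\varepsilon$. For $i=2,\ldots,k$, insert as a new node the shortest prefix $p_i$ of $S_i$ that is not yet a node. Attach it as a child of the longest prefix $q_i$ of $S_i$ that is already a node, via an edge labeled $S_i[|q_i|+1]$. The parameterized position heap $\mathrm{PPH}(T)$ is the sequence hash tree of $\langle\varepsilon,\mathrm{prev}(T[n..]),\ldots,\mathrm{prev}(T[1..])\rangle$.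 Each node is identified with the string of edge labels on the path from the root to it, and $|v|$ denotes its length (the node depth). A string is represented by $\mathrm{PPH}(T)$ if it is spelled by a path from the root. Reversed suffix links. For a node $v$ and $a\in\Sigma\cup\{0,\ldots,n-1\}$, $\mathrm{rslink}(a,v)$ is defined as follows: - if $a\in\Sigma\cup\{0\}$ and $av$ is represented by $\mathrm{PPH}(T)$, then $\mathrm{rslink}(a,v)=av$; - if $a\in\{1,\ldots,n-1\}$, $v[a]=0$, and $u=0\,v[1..a-1]\,a\,v[a+1..|v|]$ is represented by $\mathrm{PPH}(T)$, then $\mathrm{rslink}(a,v)=u$; - otherwise $\mathrm{rslink}(a,v)$ is undefined. *)

theory Defs
  imports Main
begin

text \<open>A p-string over disjoint alphabets Sigma (type 's) and Pi (type 'p) is a list of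
  ('s + 'p): Inl c is a static character c in Sigma, Inr x a parameter character x in Pi.
  Entries of the prev encoding are of type ('s + nat): Inl c for c in Sigma, Inr k for the
  number k. Positions in Isabelle lists are 0-based; the paper's S[i] is S ! (i - 1).\<close>

definition prev :: "('s + 'p) list \<Rightarrow> ('s + nat) list" where
  "prev S = map (\<lambda>i. case S ! i of
        Inl c \<Rightarrow> Inl c
      | Inr x \<Rightarrow> (if Inr x \<notin> set (take i S) then Inr 0
                  else Inr (i - (GREATEST j. j < i \<and> S ! j = Inr x))))
     [0..<length S]"

text \<open>One insertion step of a sequence hash tree: nodes are identified with the strings
  spelled from the root; the shortest prefix of S that is not yet a node is added
  (it is attached to the longest prefix that is a node, i.e. its parent prefix).\<close>

definition sht_insert :: "'a list set \<Rightarrow> 'a list \<Rightarrow> 'a list set" where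
  "sht_insert N S =
     (if \<exists>k\<le>length S. take k S \<notin> N
      then insert (take (LEAST k. take k S \<notin> N) S) N
      else N)"

text \<open>Node set of the sequence hash tree of the sequence S1, S2, ..., Sk (S1 = empty).\<close>

definition sht_nodes :: "'a list list \<Rightarrow> 'a list set" where
  "sht_nodes Ss = foldl sht_insert {[]} (tl Ss)"

text \<open>PPH(T): sequence hash tree of (empty, prev(T[n..]), ..., prev(T[1..])).
  drop i T is T[i+1..].\<close>

definition PPH :: "('s + 'p) list \<Rightarrow> ('s + nat) list set" where
  "PPH T = sht_nodes ([] # map (\<lambda>i. prev (drop i T)) (rev [0..<length T]))"

text \<open>A string is represented by PPH(T) iff it is spelled by a path from the root;
  since every edge carries one symbol, these are exactly the node strings.\<close>

definition represented :: "('s + 'p) list \<Rightarrow> ('s + nat) list \<Rightarrow> bool" where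
  "represented T w \<longleftrightarrow> w \<in> PPH T"

definition rslink :: "('s + 'p) list \<Rightarrow> ('s + nat) \<Rightarrow> ('s + nat) list \<Rightarrow> ('s + nat) list option" where
  "rslink T a v =
     (case a of
        Inl c \<Rightarrow> (if represented T (a # v) then Some (a # v) else None)
      | Inr k \<Rightarrow>
          (if k = 0 then (if represented T (a # v) then Some (a # v) else None)
           else if k \<le> length T - 1 \<and> k \<le> length v \<and> v ! (k - 1) = Inr 0
                   \<and> represented T (Inr 0 # take (k - 1) v @ [Inr k] @ drop k v)
           then Some (Inr 0 # take (k - 1) v @ [Inr k] @ drop k v)
           else None))"

end

theory Submission
  imports Defs
begin

lemma length_prev[simp]: "length (prev S) = length S"
  unfolding prev_def by (simp del: upt_Suc)

lemma prev_nth: "i < length S \<Longrightarrow> prev S ! i = (case S ! i of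
        Inl c \<Rightarrow> Inl c
      | Inr x \<Rightarrow> (if Inr x \<notin> set (take i S) then Inr 0
                  else Inr (i - (GREATEST j. j < i \<and> S ! j = Inr x))))"
proof -
  assume i: "i < length S"
  have e: "[0..<length S] ! i = i" using i by (simp del: upt_Suc)
  show ?thesis unfolding prev_def using i by (simp add: e split: sum.split)
qed

lemma prev_good: "i < length S \<Longrightarrow> prev S ! i = Inr k \<Longrightarrow> k \<le> i"
  by (auto simp: prev_nth split: sum.splits if_splits)

lemma greatest_shift:
  assumes "\<exists>j<i. P j"
  shows "(GREATEST j. j < Suc i \<and> (case j of 0 \<Rightarrow> Q | Suc m \<Rightarrow> P m)) = Suc (GREATEST j. j < i \<and> P j)"
proof -
  obtain j0 where j0: "j0 < i" "P j0" using assms by blast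
  let ?g = "GREATEST j. j < i \<and> P j"
  have b: "\<forall>y. y < i \<and> P y \<longrightarrow> y \<le> i" by auto
  have g1: "?g < i \<and> P ?g" using GreatestI_nat[of "\<lambda>j. j < i \<and> P j" j0 i] j0 by auto
  have g2: "\<And>y. y < i \<and> P y \<Longrightarrow> y \<le> ?g" using Greatest_le_nat[of "\<lambda>j. j < i \<and> P j" _ i] by auto
  show ?thesis
  proof (rule Greatest_equality)
    show "Suc ?g < Suc i \<and> (case Suc ?g of 0 \<Rightarrow> Q | Suc m \<Rightarrow> P m)" using g1 by simp
  next
    fix y assume "y < Suc i \<and> (case y of 0 \<Rightarrow> Q | Suc m \<Rightarrow> P m)"
    then show "y \<le> Suc ?g" using g2 by (cases y) auto
  qed
qed

lemma greatest_zero: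
  assumes "\<not>(\<exists>j<i. P j)" "Q"
  shows "(GREATEST j. j < Suc i \<and> (case j of 0 \<Rightarrow> Q | Suc m \<Rightarrow> P m)) = 0"
  by (rule Greatest_equality) (use assms in \<open>auto split: nat.splits\<close>)

lemma prev_Cons_Suc:
  assumes "i < length X'"
  shows "prev (x # X') ! Suc i =
     (if x = X' ! i \<and> x \<notin> set (take i X') \<and> (\<exists>z. x = Inr z) then Inr (Suc i) else prev X' ! i)"
proof -
  have cs: "\<And>j. ((x # X') ! j) = (case j of 0 \<Rightarrow> x | Suc m \<Rightarrow> X' ! m)" by (simp split: nat.splits)
  have A: "prev (x # X') ! Suc i = (case X' ! i of
        Inl c \<Rightarrow> Inl c
      | Inr y \<Rightarrow> (if Inr y \<notin> set (x # take i X') then Inr 0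
                  else Inr (Suc i - (GREATEST j. j < Suc i \<and> (x # X') ! j = Inr y))))"
    using prev_nth[of "Suc i" "x # X'"] assms by (simp split: sum.split)
  have B: "prev X' ! i = (case X' ! i of
        Inl c \<Rightarrow> Inl c
      | Inr y \<Rightarrow> (if Inr y \<notin> set (take i X') then Inr 0
                  else Inr (i - (GREATEST j. j < i \<and> X' ! j = Inr y))))"
    using prev_nth[of i X'] assms by simp
  show ?thesis
  proof (cases "X' ! i")
    case (Inl c)
    then show ?thesis using A B by simp
  next
    case (Inr z)
    show ?thesis
    proof (cases "Inr z \<in> set (take i X')")
      case True
      then have ex: "\<exists>j<i. X' ! j = Inr z" using assms by (auto simp: in_set_conv_nth)
      have g: "(GREATEST j. j < Suc i \<and> (x # X') ! j = Inr z) = Suc (GREATEST j. j < i \<and> X' ! j = Inr z)"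
        unfolding cs using greatest_shift[OF ex, of "x = Inr z"]
        by (simp add: nat.case_distrib[of "\<lambda>y. y = Inr z"])
      have "prev (x # X') ! Suc i = prev X' ! i" using A B Inr True g by simp
      moreover have "\<not> (x = X' ! i \<and> x \<notin> set (take i X'))" using Inr True by auto
      ultimately show ?thesis by auto
    next
      case False
      then have ex: "\<not>(\<exists>j<i. X' ! j = Inr z)" using assms by (auto simp: in_set_conv_nth)
      show ?thesis
      proof (cases "x = Inr z")
        case True
        have g: "(GREATEST j. j < Suc i \<and> (x # X') ! j = Inr z) = 0"
          unfolding cs using greatest_zero[OF ex, of "x = Inr z"] True
          by (simp add: nat.case_distrib[of "\<lambda>y. y = Inr z"])
        have "prev (x # X') ! Suc i = Inr (Suc i)" using A Inr True g by simp
        then show ?thesis using Inr False True by simp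
      next
        case f2: False
        have "prev (x # X') ! Suc i = prev X' ! i" using A B Inr False f2 by simp
        then show ?thesis using f2 Inr by auto
      qed
    qed
  qed
qed

definition good :: "('s + nat) list \<Rightarrow> bool" where
  "good w \<longleftrightarrow> (\<forall>i<length w. \<forall>k. w ! i = Inr k \<longrightarrow> k \<le> i)"

lemma good_prev: "good (prev S)"
  unfolding good_def
proof (intro allI impI)
  fix i k assume "i < length (prev S)" "prev S ! i = Inr k"
  then show "k \<le> i" using prev_good[of i S k] by simp
qed

lemma good_take: "good w \<Longrightarrow> good (take m w)"
  unfolding good_def by auto

lemma if_ins_sub: "(if P then insert a N else N) \<subseteq> insert a N"
proof (cases P)
  case True then show ?thesis by simp
next
  case False
  then have "(if P then insert a N else N) = N" by simp
  then show ?thesis using subset_insertI by metis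
qed

lemma good_insert: "\<forall>w\<in>N. good w \<Longrightarrow> good S \<Longrightarrow> \<forall>w\<in>sht_insert N S. good w"
proof -
  assume a: "\<forall>w\<in>N. good w" "good S"
  have "sht_insert N S \<subseteq> insert (take (LEAST k. take k S \<notin> N) S) N"
    unfolding sht_insert_def by (rule if_ins_sub)
  then show ?thesis using a good_take[OF a(2)] by blast
qed

lemma good_foldl: "\<forall>S\<in>set Ss. good S \<Longrightarrow> \<forall>w\<in>N. good w \<Longrightarrow> \<forall>w\<in>foldl sht_insert N Ss. good w"
proof (induction Ss arbitrary: N)
  case Nil then show ?case by simp
next
  case (Cons S Ss)
  have "\<forall>w\<in>sht_insert N S. good w" using good_insert[of N S] Cons.prems by simp
  then show ?case using Cons.IH[of "sht_insert N S"] Cons.prems by simp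
qed

lemma good_PPH: "w \<in> PPH T \<Longrightarrow> good w"
proof -
  assume w: "w \<in> PPH T"
  have "\<forall>w\<in>foldl sht_insert {[]} (map (\<lambda>i. prev (drop i T)) (rev [0..<length T])). good w"
    by (rule good_foldl) (simp_all add: good_prev good_def[of "[]"])
  then show "good w" using w unfolding PPH_def sht_nodes_def by simp
qed

lemma prev_first: "i < length S \<Longrightarrow> S ! i = Inr z \<Longrightarrow> Inr z \<notin> set (take i S) \<Longrightarrow> prev S ! i = Inr 0"
  by (simp add: prev_nth)

lemma prev_nth0: "prev (x # X') ! 0 = (case x of Inl c \<Rightarrow> Inl c | Inr _ \<Rightarrow> Inr 0)"
  by (simp add: prev_nth split: sum.splits)

lemma simple_case:
  assumes "prev X = a # v" "good v" "\<And>z. a \<noteq> Inr (Suc z)"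
  shows "prev (drop 1 X) = v"
proof -
  obtain x X' where X: "X = x # X'" using assms(1) by (cases X) (auto simp: prev_def)
  have len: "length X' = length v" using assms(1) X by (metis length_Cons length_prev nat.inject)
  show ?thesis
  proof (rule nth_equalityI)
    show "length (prev (drop 1 X)) = length v" using len X by simp
  next
    fix i assume "i < length (prev (drop 1 X))"
    then have i: "i < length X'" using X by simp
    have e: "prev X ! Suc i = v ! i" using assms(1) by simp
    show "prev (drop 1 X) ! i = v ! i"
    proof (cases "x = X' ! i \<and> x \<notin> set (take i X') \<and> (\<exists>z. x = Inr z)")
      case True
      have "prev (x # X') ! Suc i = Inr (Suc i)"
        by (rule trans[OF prev_Cons_Suc[OF i]]) (rule if_P[OF True])
      then have "v ! i = Inr (Suc i)" using e X by simp
      then show ?thesis using assms(2) i len unfolding good_def by fastforce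
    next
      case False
      have "prev (x # X') ! Suc i = prev X' ! i"
        by (rule trans[OF prev_Cons_Suc[OF i]]) (rule if_not_P[OF False])
      then show ?thesis using e X by simp
    qed
  qed
qed

theorem lemma3:
  fixes T :: "('s + 'p) list" and a :: "'s + nat" and u v :: "('s + nat) list"
  assumes "v \<in> PPH T"
    and "a \<in> range Inl \<union> Inr ` {0..<length T}"
    and "rslink T a v = Some u"
    and "u \<in> PPH T"
  shows "\<forall>X :: ('s + 'p) list. prev X = u \<longrightarrow> prev (drop 1 X) = v"
proof (intro allI impI)
  fix X :: "('s + 'p) list" assume pX: "prev X = u"
  have gv: "good v" using good_PPH[OF assms(1)] .
  show "prev (drop 1 X) = v"
  proof (cases "(\<exists>c. a = Inl c) \<or> a = Inr 0")
    case True
    then have "u = a # v" using assms(3) by (auto simp: rslink_def split: if_splits)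
    then show ?thesis using simple_case[of X a v] pX gv True by auto
  next
    case False
    then obtain k where ak: "a = Inr k" "k > 0" by (cases a) auto
    then have c: "k \<le> length v" "v ! (k - 1) = Inr 0"
      and u: "u = Inr 0 # take (k - 1) v @ [Inr k] @ drop k v"
      using assms(3) by (auto simp: rslink_def split: if_splits)
    have lu: "length u = Suc (length v)" using u c ak by simp
    have unth: "\<And>i. i < length v \<Longrightarrow> u ! Suc i = (if i = k - 1 then Inr k else v ! i)"
    proof -
      fix i assume i: "i < length v"
      have "u ! Suc i = (take (k - 1) v @ [Inr k] @ drop k v) ! i" using u by simp
      also have "\<dots> = (if i = k - 1 then Inr k else v ! i)"
        using c ak i by (auto simp: nth_append min_def)
      finally show "u ! Suc i = (if i = k - 1 then Inr k else v ! i)" .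
    qed
    obtain x X' where X: "X = x # X'" using pX u by (cases X) (auto simp: prev_def)
    have len: "length X' = length v" using pX lu X by (metis length_Cons length_prev nat.inject)
    have km: "k - 1 < length X'" using c ak len by simp
    have pk: "prev X ! Suc (k - 1) = Inr k" using unth[of "k-1"] pX km len by simp
    have cond: "x = X' ! (k-1) \<and> x \<notin> set (take (k-1) X') \<and> (\<exists>z. x = Inr z)"
    proof (rule ccontr)
      assume nc: "\<not> ?thesis"
      have "prev (x # X') ! Suc (k - 1) = prev X' ! (k - 1)"
        by (rule trans[OF prev_Cons_Suc[OF km]]) (rule if_not_P[OF nc])
      then have "prev X' ! (k - 1) = Inr k" using pk X by simp
      then show False using prev_good[OF km] ak by fastforce
    qed
    show ?thesis
    proof (rule nth_equalityI)
      show "length (prev (drop 1 X)) = length v" using len X by simp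
    next
      fix i assume "i < length (prev (drop 1 X))"
      then have i: "i < length X'" using X by simp
      show "prev (drop 1 X) ! i = v ! i"
      proof (cases "i = k - 1")
        case True
        obtain z where z: "x = Inr z" using cond by blast
        have "prev X' ! (k - 1) = Inr 0"
          by (rule prev_first[OF km, of z]) (use cond z in metis)+
        then show ?thesis using True c X by simp
      next
        case False
        have nc: "\<not> (x = X' ! i \<and> x \<notin> set (take i X'))"
        proof
          assume h: "x = X' ! i \<and> x \<notin> set (take i X')"
          show False
          proof (cases "i < k - 1")
            case True
            then have "X' ! i \<in> set (take (k-1) X')" using km by (auto simp: in_set_conv_nth)
            then show False using h cond by metis
          next
            case f: False
            then have "X' ! (k-1) \<in> set (take i X')" using False i km
              by (auto simp: in_set_conv_nth intro!: exI[of _ "k-1"])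
            then show False using h cond by metis
          qed
        qed
        have "prev X ! Suc i = v ! i" using unth[of i] pX False i len by simp
        have nc2: "\<not> (x = X' ! i \<and> x \<notin> set (take i X') \<and> (\<exists>z. x = Inr z))" using nc by blast
        have "prev (x # X') ! Suc i = prev X' ! i"
          by (rule trans[OF prev_Cons_Suc[OF i]]) (rule if_not_P[OF nc2])
        then show ?thesis using \<open>prev X ! Suc i = v ! i\<close> X by simp
      qed
    qed
  qed
qed

end
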